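(* For every $k\ge2$ one has $[D^{(k)}_x,D^{(k)}_y]=0$ on $\mathcal E_k$, and also $[D^{( * )}_x,D^{( * )}_y]=0$ on $\mathcal E_*$.
   Context: Let $\mathcal E_1$ be the system $u_y+vu_x=\frac1{v-u}$, $v_y+uv_x=\frac1{u-v}$ with internal coordinates $x,y,u_i=\partial^iu/\partial x^i$, $v_i=\partial^iv/\partial x^i$ ($i\ge0$) and total derivatives $D_x=\partial_x+\sum_i(u_{i+1}\partial_{u_i}+v_{i+1}\partial_{v_i})$, $D_y=\partial_y+\sum_i\big(D_x^i(\tfrac1{v-u}-vu_1)\partial_{u_i}+D_x^i(\tfrac1{u-v}-uv_1)\partial_{v_i}\big)$. Let $\sigma_m=\sum_{i+j=m}u^iv^j$, $\psi^{(1)}=y$, $\psi^{(2)}=x$, and let $\psi^{(k)}$, $k\ge3$, be new coordinates; for $k\ge2$ put $X^{(k)}=\sigma_{k-2}-\sum_{i=1}^{k-3}i\,\sigma_{k-i-3}\psi^{(i)}$ and for $k\ge3$ put $Y^{(k)}=-uv\,X^{(k-1)}-(k-2)\psi^{(k-2)}$. For $k\ge2$, $\mathcal E_k=\mathcal E_1\times\mathbb R^{k-1}$ has the additional coordinates $\psi^{(3)},\dots,\psi^{(k+1)}$ and the vector fields $D^{(k)}_x=D_x+\sum_{i=3}^{k+1}X^{(i)}\partial/\partial\psi^{(i)}$, $D^{(k)}_y=D_y+\sum_{i=3}^{k+1}Y^{(i)}\partial/\partial\psi^{(i)}$; $\mathcal E_*$ is the inverse limit (all $\psi^{(k)}$,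 $k\ge3$) with $D^{( * )}_x,D^{( * )}_y$ defined by the infinite sums. *)

theory Defs
  imports "HOL-Analysis.Analysis"
begin

text \<open>Internal coordinates of the (infinite) jet-type manifolds:
  x, y, u_i, v_i (i \<ge> 0) and the nonlocal coordinates psi^(k) (k \<ge> 3).
  On E_k only psi^(3..k+1) are relevant; the vector fields below have zero
  components along, and coefficients independent of, the remaining psi's.\<close>

datatype coord = CX | CY | CU nat | CV nat | CPsi nat

type_synonym pt = "coord \<Rightarrow> real"

type_synonym vfield = "coord \<Rightarrow> pt \<Rightarrow> real"

definition pderiv_coord :: "coord \<Rightarrow> (pt \<Rightarrow> real) \<Rightarrow> pt \<Rightarrow> real" where
  "pderiv_coord c f p = deriv (\<lambda>t. f (p(c := t))) (p c)"

definition apply_vf :: "vfield \<Rightarrow> (pt \<Rightarrow> real) \<Rightarrow> pt \<Rightarrow> real" where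
  "apply_vf X f p = infsum (\<lambda>c. X c p * pderiv_coord c f p) UNIV"

definition lie_bracket :: "vfield \<Rightarrow> vfield \<Rightarrow> vfield" where
  "lie_bracket X Y c p = apply_vf X (Y c) p - apply_vf Y (X c) p"

fun Dx :: vfield where
  "Dx CX = (\<lambda>p. 1)"
| "Dx CY = (\<lambda>p. 0)"
| "Dx (CU i) = (\<lambda>p. p (CU (Suc i)))"
| "Dx (CV i) = (\<lambda>p. p (CV (Suc i)))"
| "Dx (CPsi k) = (\<lambda>p. 0)"

definition rhsU :: "pt \<Rightarrow> real" where
  "rhsU p = 1 / (p (CV 0) - p (CU 0)) - p (CV 0) * p (CU 1)"

definition rhsV :: "pt \<Rightarrow> real" where
  "rhsV p = 1 / (p (CU 0) - p (CV 0)) - p (CU 0) * p (CV 1)"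

fun Dy :: vfield where
  "Dy CX = (\<lambda>p. 0)"
| "Dy CY = (\<lambda>p. 1)"
| "Dy (CU i) = (apply_vf Dx ^^ i) rhsU"
| "Dy (CV i) = (apply_vf Dx ^^ i) rhsV"
| "Dy (CPsi k) = (\<lambda>p. 0)"

definition sigma :: "nat \<Rightarrow> pt \<Rightarrow> real" where
  "sigma m p = (\<Sum>i\<le>m. p (CU 0) ^ i * p (CV 0) ^ (m - i))"

definition psi :: "nat \<Rightarrow> pt \<Rightarrow> real" where
  "psi k p = (if k = 1 then p CY else if k = 2 then p CX else p (CPsi k))"

definition Xk :: "nat \<Rightarrow> pt \<Rightarrow> real" where
  "Xk k p = sigma (k - 2) p
      - (\<Sum>i = 1..k - 3. real i * sigma (k - i - 3) p * psi i p)"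

definition Yk :: "nat \<Rightarrow> pt \<Rightarrow> real" where
  "Yk k p = - (p (CU 0) * p (CV 0)) * Xk (k - 1) p - real (k - 2) * psi (k - 2) p"

definition Dxk :: "nat \<Rightarrow> vfield" where
  "Dxk k c = (case c of CPsi i \<Rightarrow> (if 3 \<le> i \<and> i \<le> k + 1 then Xk i else (\<lambda>p. 0))
                     | _ \<Rightarrow> Dx c)"

definition Dyk :: "nat \<Rightarrow> vfield" where
  "Dyk k c = (case c of CPsi i \<Rightarrow> (if 3 \<le> i \<and> i \<le> k + 1 then Yk i else (\<lambda>p. 0))
                     | _ \<Rightarrow> Dy c)"

definition Dx_star :: vfield where
  "Dx_star c = (case c of CPsi i \<Rightarrow> (if 3 \<le> i then Xk i else (\<lambda>p. 0)) | _ \<Rightarrow> Dx c)"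

definition Dy_star :: vfield where
  "Dy_star c = (case c of CPsi i \<Rightarrow> (if 3 \<le> i then Yk i else (\<lambda>p. 0)) | _ \<Rightarrow> Dy c)"

end

theory Submission
  imports Defs
begin


definition dep :: "coord set \<Rightarrow> (pt \<Rightarrow> real) \<Rightarrow> bool" where
  "dep S f \<longleftrightarrow> (\<forall>p q. (\<forall>c\<in>S. p c = q c) \<longrightarrow> f p = f q)"

definition dif :: "(pt \<Rightarrow> real) \<Rightarrow> bool" where
  "dif f \<longleftrightarrow> (\<forall>c p. (\<lambda>t. f (p(c:=t))) differentiable (at (p c)))"

definition nice :: "(pt \<Rightarrow> real) \<Rightarrow> bool" where
  "nice f \<longleftrightarrow> (\<exists>S. finite S \<and> dep S f) \<and> dif f"

lemma pd_zero: assumes "dep S f" "c \<notin> S" shows "pderiv_coord c f p = 0"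
proof -
  have "(\<lambda>t. f (p(c:=t))) = (\<lambda>t. f p)"
    using assms unfolding dep_def by (intro ext) (metis fun_upd_other)
  then show ?thesis unfolding pderiv_coord_def by (simp add: DERIV_imp_deriv)
qed

lemma pd_const[simp]: "pderiv_coord c (\<lambda>_. a) p = 0"
  unfolding pderiv_coord_def by (simp add: DERIV_imp_deriv)

lemma pd_proj: "pderiv_coord c (\<lambda>q. q d) p = (if c = d then 1 else 0)"
proof (cases "c = d")
  case True
  then show ?thesis unfolding pderiv_coord_def
    by (simp add: DERIV_imp_deriv DERIV_ident)
next
  case False
  then have "(\<lambda>t. (p(c:=t)) d) = (\<lambda>t. p d)" by auto
  then show ?thesis using False unfolding pderiv_coord_def by (simp add: DERIV_imp_deriv)
qed

lemma difD: "dif f \<Longrightarrow> ((\<lambda>t. f (p(c:=t))) has_real_derivative pderiv_coord c f p) (at (p c))"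
  unfolding dif_def pderiv_coord_def using DERIV_deriv_iff_real_differentiable by blast

lemma difI: "(\<And>c p. \<exists>D. ((\<lambda>t. f (p(c:=t))) has_real_derivative D) (at (p c))) \<Longrightarrow> dif f"
  unfolding dif_def using real_differentiable_def by blast

lemma dif_const[simp]: "dif (\<lambda>_. a)"
  by (rule difI) (auto intro: DERIV_const)

lemma dif_proj[simp]: "dif (\<lambda>q. q d)"
proof (rule difI)
  fix c p
  show "\<exists>D. ((\<lambda>t. (p(c:=t)) d) has_real_derivative D) (at (p c))"
  proof (cases "c = d")
    case True then show ?thesis by (auto intro: DERIV_ident)
  next
    case False then show ?thesis by (auto intro: DERIV_const)
  qed
qed

lemma dif_add[simp]: "dif f \<Longrightarrow> dif g \<Longrightarrow> dif (\<lambda>q. f q + g q)"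
  by (rule difI, rule exI, rule DERIV_add[OF difD difD])
lemma dif_mult[simp]: "dif f \<Longrightarrow> dif g \<Longrightarrow> dif (\<lambda>q. f q * g q)"
  by (rule difI, rule exI, rule DERIV_mult[OF difD difD])
lemma dif_minus[simp]: "dif f \<Longrightarrow> dif (\<lambda>q. - f q)"
  by (rule difI, rule exI, rule DERIV_minus[OF difD])
lemma dif_diff[simp]: "dif f \<Longrightarrow> dif g \<Longrightarrow> dif (\<lambda>q. f q - g q)"
  by (rule difI, rule exI, rule DERIV_diff[OF difD difD])

lemma pd_add: "dif f \<Longrightarrow> dif g \<Longrightarrow> pderiv_coord c (\<lambda>q. f q + g q) p = pderiv_coord c f p + pderiv_coord c g p"
  unfolding pderiv_coord_def[of c "\<lambda>q. f q + g q"]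
  by (rule DERIV_imp_deriv, rule DERIV_add[OF difD difD])
lemma pd_diff: "dif f \<Longrightarrow> dif g \<Longrightarrow> pderiv_coord c (\<lambda>q. f q - g q) p = pderiv_coord c f p - pderiv_coord c g p"
  unfolding pderiv_coord_def[of c "\<lambda>q. f q - g q"]
  by (rule DERIV_imp_deriv, rule DERIV_diff[OF difD difD])
lemma pd_minus: "dif f \<Longrightarrow> pderiv_coord c (\<lambda>q. - f q) p = - pderiv_coord c f p"
  unfolding pderiv_coord_def[of c "\<lambda>q. - f q"]
  by (rule DERIV_imp_deriv, rule DERIV_minus[OF difD])
lemma pd_mult: "dif f \<Longrightarrow> dif g \<Longrightarrow> pderiv_coord c (\<lambda>q. f q * g q) p = f p * pderiv_coord c g p + pderiv_coord c f p * g p"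
proof -
  assume a: "dif f" "dif g"
  have "((\<lambda>t. f (p(c:=t)) * g (p(c:=t))) has_real_derivative
     pderiv_coord c f p * g (p(c:=p c)) + pderiv_coord c g p * f (p(c:=p c))) (at (p c))"
    by (rule DERIV_mult[OF difD[OF a(1)] difD[OF a(2)]])
  then show ?thesis unfolding pderiv_coord_def[of c "\<lambda>q. f q * g q"]
    by (simp add: DERIV_imp_deriv algebra_simps)
qed

lemma dep_mono: "dep S f \<Longrightarrow> S \<subseteq> T \<Longrightarrow> dep T f"
  unfolding dep_def by blast

lemma apply_vf_sum: assumes "finite S" "dep S f"
  shows "apply_vf V f p = (\<Sum>c\<in>S. V c p * pderiv_coord c f p)"
  unfolding apply_vf_def
  by (subst infsum_finite[OF assms(1), symmetric], rule infsum_cong_neutral)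
     (use pd_zero[OF assms(2)] in auto)

lemma apply_vf_agree: assumes "dep S f" "\<And>c. c \<in> S \<Longrightarrow> V c p = W c p"
  shows "apply_vf V f p = apply_vf W f p"
proof -
  have "(\<lambda>c. V c p * pderiv_coord c f p) = (\<lambda>c. W c p * pderiv_coord c f p)"
  proof (rule ext)
    fix c show "V c p * pderiv_coord c f p = W c p * pderiv_coord c f p"
      by (cases "c \<in> S") (simp_all add: assms pd_zero[OF assms(1)])
  qed
  then show ?thesis unfolding apply_vf_def by simp
qed

lemma apply_vf_const[simp]: "apply_vf V (\<lambda>_. a) p = 0"
  unfolding apply_vf_def by simp

lemma apply_vf_proj: "apply_vf V (\<lambda>q. q d) p = V d p"
proof -
  have d: "dep {d} (\<lambda>q. q d)" unfolding dep_def by auto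
  show ?thesis by (simp add: apply_vf_sum[OF _ d] pd_proj)
qed

lemma nice_common: "nice f \<Longrightarrow> nice g \<Longrightarrow> \<exists>S. finite S \<and> dep S f \<and> dep S g"
proof -
  assume a: "nice f" "nice g"
  obtain S1 where "finite S1" "dep S1 f" using a(1) nice_def by blast
  moreover obtain S2 where "finite S2" "dep S2 g" using a(2) nice_def by blast
  ultimately have "finite (S1 \<union> S2) \<and> dep (S1 \<union> S2) f \<and> dep (S1 \<union> S2) g"
    using dep_mono[of S1 f] dep_mono[of S2 g] by auto
  then show ?thesis by blast
qed

lemma dep_add: assumes "dep S f" "dep S g" shows "dep S (\<lambda>q. f q + g q)"
  unfolding dep_def
proof (intro allI impI)
  fix p q :: pt assume h: "\<forall>c\<in>S. p c = q c"
  have "f p = f q" "g p = g q" using assms h unfolding dep_def by blast+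
  then show "f p + g p = f q + g q" by simp
qed
lemma dep_mult: assumes "dep S f" "dep S g" shows "dep S (\<lambda>q. f q * g q)"
  unfolding dep_def
proof (intro allI impI)
  fix p q :: pt assume h: "\<forall>c\<in>S. p c = q c"
  have "f p = f q" "g p = g q" using assms h unfolding dep_def by blast+
  then show "f p * g p = f q * g q" by simp
qed
lemma dep_diff: assumes "dep S f" "dep S g" shows "dep S (\<lambda>q. f q - g q)"
  unfolding dep_def
proof (intro allI impI)
  fix p q :: pt assume h: "\<forall>c\<in>S. p c = q c"
  have "f p = f q" "g p = g q" using assms h unfolding dep_def by blast+
  then show "f p - g p = f q - g q" by simp
qed
lemma dep_minus: assumes "dep S f" shows "dep S (\<lambda>q. - f q)"
  using assms unfolding dep_def by (metis)

lemma nice_const[simp]: "nice (\<lambda>_. a)" unfolding nice_def dep_def by auto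
lemma nice_proj[simp]: "nice (\<lambda>q. q d)" unfolding nice_def dep_def by (auto intro!: exI[of _ "{d}"])
lemma nice_add[simp]: "nice f \<Longrightarrow> nice g \<Longrightarrow> nice (\<lambda>q. f q + g q)"
proof -
  assume a: "nice f" "nice g"
  obtain S where "finite S" "dep S f" "dep S g" using nice_common[OF a] by blast
  moreover have "dif f" "dif g" using a nice_def by auto
  ultimately show ?thesis unfolding nice_def using dep_add dif_add by blast
qed
lemma nice_mult[simp]: "nice f \<Longrightarrow> nice g \<Longrightarrow> nice (\<lambda>q. f q * g q)"
proof -
  assume a: "nice f" "nice g"
  obtain S where "finite S" "dep S f" "dep S g" using nice_common[OF a] by blast
  moreover have "dif f" "dif g" using a nice_def by auto
  ultimately show ?thesis unfolding nice_def using dep_mult dif_mult by blast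
qed
lemma nice_diff[simp]: "nice f \<Longrightarrow> nice g \<Longrightarrow> nice (\<lambda>q. f q - g q)"
proof -
  assume a: "nice f" "nice g"
  obtain S where "finite S" "dep S f" "dep S g" using nice_common[OF a] by blast
  moreover have "dif f" "dif g" using a nice_def by auto
  ultimately show ?thesis unfolding nice_def using dep_diff dif_diff by blast
qed
lemma nice_minus[simp]: "nice f \<Longrightarrow> nice (\<lambda>q. - f q)"
  unfolding nice_def using dep_minus dif_minus by blast

lemma av_add: assumes "nice f" "nice g"
  shows "apply_vf V (\<lambda>q. f q + g q) p = apply_vf V f p + apply_vf V g p"
proof -
  obtain S where S: "finite S" "dep S f" "dep S g" using nice_common[OF assms] by blast
  have d: "dif f" "dif g" using assms nice_def by auto
  show ?thesis using S d
    by (simp add: apply_vf_sum dep_add pd_add distrib_left sum.distrib)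
qed

lemma av_diff: assumes "nice f" "nice g"
  shows "apply_vf V (\<lambda>q. f q - g q) p = apply_vf V f p - apply_vf V g p"
proof -
  obtain S where S: "finite S" "dep S f" "dep S g" using nice_common[OF assms] by blast
  have d: "dif f" "dif g" using assms nice_def by auto
  show ?thesis using S d
    by (simp add: apply_vf_sum dep_diff pd_diff right_diff_distrib sum_subtractf)
qed

lemma av_minus: assumes "nice f"
  shows "apply_vf V (\<lambda>q. - f q) p = - apply_vf V f p"
proof -
  obtain S where S: "finite S" "dep S f" using assms nice_def by blast
  have d: "dif f" using assms nice_def by auto
  show ?thesis using S d
    by (simp add: apply_vf_sum dep_minus pd_minus sum_negf)
qed

lemma av_mult: assumes "nice f" "nice g"
  shows "apply_vf V (\<lambda>q. f q * g q) p = f p * apply_vf V g p + apply_vf V f p * g p"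
proof -
  obtain S where S: "finite S" "dep S f" "dep S g" using nice_common[OF assms] by blast
  have d: "dif f" "dif g" using assms nice_def by auto
  show ?thesis using S d
    by (simp add: apply_vf_sum dep_mult pd_mult distrib_left sum.distrib sum_distrib_left
        sum_distrib_right algebra_simps)
qed




definition sF :: "pt \<Rightarrow> real" where "sF p = p (CU 0) + p (CV 0)"
definition qF :: "pt \<Rightarrow> real" where "qF p = p (CU 0) * p (CV 0)"
definition Xc :: "nat \<Rightarrow> pt \<Rightarrow> real" where "Xc j = (if j = 1 then (\<lambda>_. 0) else Xk j)"
definition Yc :: "nat \<Rightarrow> pt \<Rightarrow> real" where
  "Yc j = (if j = 1 then (\<lambda>_. 1) else if j = 2 then (\<lambda>_. 0) else Yk j)"
definition G :: "nat \<Rightarrow> pt \<Rightarrow> real" where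
  "G n p = (\<Sum>i<n. real i * psi i p * sigma (n - 1 - i) p)"

lemma sigma_Suc: "sigma (Suc m) p = p (CV 0) ^ Suc m + p (CU 0) * sigma m p"
  unfolding sigma_def
  by (subst sum.atMost_Suc_shift) (simp add: sum_distrib_left mult.assoc)

lemma sigma_rec: "sigma (Suc (Suc m)) p = sF p * sigma (Suc m) p - qF p * sigma m p"
proof -
  have "sigma (Suc m) p = p (CV 0) ^ Suc m + p (CU 0) * sigma m p" by (rule sigma_Suc)
  then show ?thesis using sigma_Suc[of "Suc m" p] unfolding sF_def qF_def
    by (simp add: algebra_simps)
qed

lemma sigma0[simp]: "sigma 0 p = 1" unfolding sigma_def by simp
lemma sigma1: "sigma 1 p = sF p" unfolding sigma_def sF_def by simp

lemma Xk_G: "Xk (n + 2) p = sigma n p - G n p"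
proof -
  have "(\<Sum>i = 1..n + 2 - 3. real i * sigma (n + 2 - i - 3) p * psi i p)
      = (\<Sum>i<n. real i * psi i p * sigma (n - 1 - i) p)"
  proof (rule sum.mono_neutral_cong_left)
    show "{1..n + 2 - 3} \<subseteq> {..<n}" by auto
    show "\<forall>i\<in>{..<n} - {1..n + 2 - 3}. real i * psi i p * sigma (n - 1 - i) p = 0"
      by auto
    show "\<And>x. x \<in> {1..n + 2 - 3} \<Longrightarrow> real x * sigma (n + 2 - x - 3) p * psi x p
        = real x * psi x p * sigma (n - 1 - x) p"
      by (auto simp: algebra_simps)
  qed auto
  then show ?thesis unfolding Xk_def G_def by simp
qed


lemma G_rec: "G (Suc (Suc n)) p = real (Suc n) * psi (Suc n) p + sF p * G (Suc n) p - qF p * G n p"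
proof -
  have ar: "Suc (Suc n) - 1 - i = Suc (Suc (n - 1 - i))" "Suc n - 1 - i = Suc (n - 1 - i)" if "i \<in> {..<n}" for i
    using that by auto
  have c1: "(\<Sum>i<n. real i * psi i p * sigma (Suc (Suc n) - 1 - i) p)
     = (\<Sum>i<n. real i * psi i p * sigma (Suc (Suc (n - 1 - i))) p)"
    by (rule sum.cong[OF refl]) (simp only: ar)
  have c2: "(\<Sum>i<n. real i * psi i p * sigma (Suc n - 1 - i) p)
     = (\<Sum>i<n. real i * psi i p * sigma (Suc (n - 1 - i)) p)"
    by (rule sum.cong[OF refl]) (simp only: ar)
  have e1: "G (Suc (Suc n)) p = real (Suc n) * psi (Suc n) p + real n * psi n p * sigma 1 p
      + (\<Sum>i<n. real i * psi i p * sigma (Suc (Suc (n - 1 - i))) p)"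
    unfolding G_def sum.lessThan_Suc c1[symmetric] by simp
  have e2: "G (Suc n) p = real n * psi n p + (\<Sum>i<n. real i * psi i p * sigma (Suc (n - 1 - i)) p)"
    unfolding G_def sum.lessThan_Suc c2[symmetric] by simp
  have s3: "(\<Sum>i<n. real i * psi i p * (sF p * sigma (Suc (n - 1 - i)) p - qF p * sigma (n - 1 - i) p))
     = sF p * (\<Sum>i<n. real i * psi i p * sigma (Suc (n - 1 - i)) p) - qF p * G n p"
    unfolding G_def sum_distrib_left sum_subtractf[symmetric]
    by (rule sum.cong[OF refl]) (simp add: algebra_simps)
  show ?thesis unfolding e1 e2 sigma_rec sigma1 s3
    by (simp add: ring_distribs)
qed

lemma Xk2: "Xk 2 = (\<lambda>_. 1)" unfolding Xk_def by (auto simp: sigma_def)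
lemma Xk2': "Xk (Suc (Suc 0)) = (\<lambda>_. 1)" using Xk2 by (simp add: numeral_2_eq_2)

lemma R1: assumes "j \<ge> 2" shows "Xk j p = sF p * Xc (j - 1) p + Yc (j - 1) p"
proof -
  obtain n where j: "j = n + 2" using assms by (metis add.commute le_iff_add)
  show ?thesis
  proof (cases n)
    case 0 then show ?thesis using j by (simp add: Xc_def Yc_def Xk2')
  next
    case (Suc m)
    show ?thesis
    proof (cases m)
      case 0 then show ?thesis using j Suc Xk_G[of 1 p]
        using sigma1[of p] by (simp add: Xc_def Yc_def Xk2' G_def)
    next
      case (Suc m')
      have "Xk j p = sigma (Suc (Suc m')) p - G (Suc (Suc m')) p"
        using j \<open>n = Suc m\<close> Suc Xk_G by simp
      also have "\<dots> = sF p * (sigma (Suc m') p - G (Suc m') p)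
           + (- qF p * (sigma m' p - G m' p) - real (Suc m') * psi (Suc m') p)"
        unfolding sigma_rec G_rec by (simp add: algebra_simps)
      also have "\<dots> = sF p * Xk (Suc m' + 2) p + (- qF p * Xk (m' + 2) p - real (Suc m') * psi (Suc m') p)"
        by (simp only: Xk_G)
      also have "\<dots> = sF p * Xc (j - 1) p + Yc (j - 1) p"
        using j \<open>n = Suc m\<close> Suc by (simp add: Xc_def Yc_def Yk_def qF_def)
      finally show ?thesis .
    qed
  qed
qed




definition pc :: "nat \<Rightarrow> coord" where
  "pc j = (if j = 1 then CY else if j = 2 then CX else CPsi j)"

lemma psi_pc: "psi j = (\<lambda>q. q (pc j))"
  unfolding psi_def[abs_def] pc_def by auto

lemma nice_psi[simp]: "nice (psi j)" unfolding psi_pc by simp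
lemma nice_sF[simp]: "nice sF" unfolding sF_def[abs_def] by simp
lemma nice_qF[simp]: "nice qF" unfolding qF_def[abs_def] by simp

lemma LX: "j \<ge> 2 \<Longrightarrow> Xc j = (\<lambda>q. sF q * Xc (j - 1) q + Yc (j - 1) q)"
proof -
  assume j: "j \<ge> 2"
  have "Xc j = Xk j" using j by (simp add: Xc_def)
  then show ?thesis using R1[OF j] by auto
qed

lemma LY: "j \<ge> 3 \<Longrightarrow> Yc j = (\<lambda>q. - (qF q * Xc (j - 1) q) - real (j - 2) * psi (j - 2) q)"
proof -
  assume j: "j \<ge> 3"
  have "Yc j = Yk j" "Xc (j - 1) = Xk (j - 1)" using j by (auto simp: Yc_def Xc_def)
  then show ?thesis by (simp add: Yk_def[abs_def] qF_def)
qed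

lemma nice_XY: "nice (Xc (Suc n)) \<and> nice (Yc (Suc n))"
proof (induction n)
  case 0 then show ?case by (simp add: Xc_def Yc_def)
next
  case (Suc n)
  have x: "nice (Xc (Suc (Suc n)))" using Suc LX[of "Suc (Suc n)"] by simp
  have y: "nice (Yc (Suc (Suc n)))"
  proof (cases n)
    case 0 then show ?thesis by (simp add: Yc_def)
  next
    case (Suc m)
    then show ?thesis using LY[of "Suc (Suc n)"] Suc.IH by simp
  qed
  show ?case using x y by simp
qed

lemma nice_Xc: "j \<ge> 1 \<Longrightarrow> nice (Xc j)" using nice_XY[of "j - 1"] by simp
lemma nice_Yc: "j \<ge> 1 \<Longrightarrow> nice (Yc j)" using nice_XY[of "j - 1"] by simp

lemma DX: "j \<ge> 2 \<Longrightarrow> apply_vf V (Xc j) p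
   = sF p * apply_vf V (Xc (j - 1)) p + apply_vf V sF p * Xc (j - 1) p + apply_vf V (Yc (j - 1)) p"
  by (subst LX, assumption) (simp add: av_add av_mult nice_Xc nice_Yc)

lemma DY: "j \<ge> 3 \<Longrightarrow> apply_vf V (Yc j) p
   = - (qF p * apply_vf V (Xc (j - 1)) p + apply_vf V qF p * Xc (j - 1) p)
     - real (j - 2) * apply_vf V (psi (j - 2)) p"
  by (subst LY, assumption) (simp add: av_diff av_minus av_mult nice_Xc)

lemma TXpsi: "j \<ge> 1 \<Longrightarrow> apply_vf Dx_star (psi j) p = Xc j p"
  unfolding psi_pc apply_vf_proj
  by (auto simp: pc_def Dx_star_def Xc_def Xk2' numeral_2_eq_2)

lemma TYpsi: "j \<ge> 1 \<Longrightarrow> apply_vf Dy_star (psi j) p = Yc j p"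
  unfolding psi_pc apply_vf_proj
  by (auto simp: pc_def Dy_star_def Yc_def numeral_2_eq_2)

lemma TXs: "apply_vf Dx_star sF p = p (CU 1) + p (CV 1)"
  unfolding sF_def[abs_def] by (simp add: av_add apply_vf_proj Dx_star_def)
lemma TXq: "apply_vf Dx_star qF p = p (CU 0) * p (CV 1) + p (CU 1) * p (CV 0)"
  unfolding qF_def[abs_def] by (simp add: av_mult apply_vf_proj Dx_star_def)
lemma TYs0: "apply_vf Dy_star sF p = rhsU p + rhsV p"
  unfolding sF_def[abs_def] by (simp add: av_add apply_vf_proj Dy_star_def)
lemma TYq0: "apply_vf Dy_star qF p = p (CU 0) * rhsV p + rhsU p * p (CV 0)"
  unfolding qF_def[abs_def] by (simp add: av_mult apply_vf_proj Dy_star_def)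

lemma rhs_w: "rhsU p = - (1 / (p (CU 0) - p (CV 0))) - p (CV 0) * p (CU 1)"
  "rhsV p = 1 / (p (CU 0) - p (CV 0)) - p (CU 0) * p (CV 1)"
proof -
  have e: "1 / (p (CV 0) - p (CU 0)) = - (1 / (p (CU 0) - p (CV 0)))"
    by (metis minus_diff_eq minus_divide_right)
  show "rhsU p = - (1 / (p (CU 0) - p (CV 0))) - p (CV 0) * p (CU 1)"
    unfolding rhsU_def e by simp
  show "rhsV p = 1 / (p (CU 0) - p (CV 0)) - p (CU 0) * p (CV 1)"
    unfolding rhsV_def by simp
qed

lemma TYs: "apply_vf Dy_star sF p = - (p (CU 0) * p (CV 1) + p (CU 1) * p (CV 0))"
  unfolding TYs0 rhs_w by (simp add: algebra_simps)

lemma TYq: assumes a: "p (CU 0) \<noteq> p (CV 0)"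
  shows "apply_vf Dy_star qF p = 1 - p (CV 0) * p (CV 0) * p (CU 1) - p (CU 0) * p (CU 0) * p (CV 1)"
proof -
  define w where "w = 1 / (p (CU 0) - p (CV 0))"
  have w: "w * (p (CU 0) - p (CV 0)) = 1" unfolding w_def using a by simp
  have w': "p (CU 0) * w - w * p (CV 0) = 1" using w by (simp add: algebra_simps)
  have "apply_vf Dy_star qF p = (p (CU 0) * w - w * p (CV 0))
      - p (CV 0) * p (CV 0) * p (CU 1) - p (CU 0) * p (CU 0) * p (CV 1)"
    unfolding TYq0 rhs_w w_def[symmetric] by (simp add: algebra_simps)
  then show ?thesis using w' by simp
qed

lemma alg:
  fixes za zd zb zf zc ze zg zh zk x1 xn yn xm tys tyq txq txs zs zq u v u1 v1 nn :: real
  assumes "za = zs * zb + tys * xm + zc" "zd = -(zq * ze + txq * xm) - (nn+1) * x1" "zb = zf"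
    "zf = -(zq * zg + txq * x1) - nn * xn" "zc = -(zq * zh + tyq * x1) - nn * yn" "ze = zs * zg + txs * x1 + zk" "zh = zk"
    "x1 = zs * xn + yn" "tys = -txq" "tyq = 1 - v * v * u1 - u * u * v1" "txq = u * v1+u1 * v" "txs = u1+v1"
    "zs = u+v" "zq = u * v"
  shows "za = zd"
  using assms by algebra


lemma main_Q:
  assumes uv: "p (CU 0) \<noteq> p (CV 0)"
  shows "apply_vf Dy_star (Xc (Suc n)) p = apply_vf Dx_star (Yc (Suc n)) p
       \<and> apply_vf Dy_star (Xc (Suc (Suc n))) p = apply_vf Dx_star (Yc (Suc (Suc n))) p"
proof (induction n)
  case 0
  have "Xc (Suc 0) = (\<lambda>_. 0)" "Yc (Suc 0) = (\<lambda>_. 1)" "Xc (Suc (Suc 0)) = (\<lambda>_. 1)"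
    "Yc (Suc (Suc 0)) = (\<lambda>_. 0)" by (simp_all add: Xc_def Yc_def Xk2')
  then show ?case by simp
next
  case (Suc n)
  have Q1: "apply_vf Dy_star (Xc (Suc n)) p = apply_vf Dx_star (Yc (Suc n)) p" using Suc.IH by blast
  have Q2: "apply_vf Dy_star (Xc (Suc (Suc n))) p = apply_vf Dx_star (Yc (Suc (Suc n))) p"
    using Suc.IH by blast
  have A: "apply_vf Dy_star (Xc (Suc (Suc (Suc n)))) p = sF p * apply_vf Dy_star (Xc (Suc (Suc n))) p
     + apply_vf Dy_star sF p * Xc (Suc (Suc n)) p + apply_vf Dy_star (Yc (Suc (Suc n))) p"
    using DX[of "Suc (Suc (Suc n))"] by simp
  have D: "apply_vf Dx_star (Yc (Suc (Suc (Suc n)))) p = - (qF p * apply_vf Dx_star (Xc (Suc (Suc n))) p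
     + apply_vf Dx_star qF p * Xc (Suc (Suc n)) p) - (real n + 1) * Xc (Suc n) p"
    using DY[of "Suc (Suc (Suc n))"] TXpsi[of "Suc n"] by simp
  have tys: "apply_vf Dy_star sF p = - apply_vf Dx_star qF p" using TYs TXq by simp
  have new: "apply_vf Dy_star (Xc (Suc (Suc (Suc n)))) p = apply_vf Dx_star (Yc (Suc (Suc (Suc n)))) p"
  proof (cases n)
    case 0
    have "Xc (Suc 0) = (\<lambda>_. 0)" "Xc (Suc (Suc 0)) = (\<lambda>_. 1)"
      "Yc (Suc (Suc 0)) = (\<lambda>_. 0)" by (simp_all add: Xc_def Yc_def Xk2')
    then show ?thesis using A D tys 0 by simp
  next
    case (Suc n')
    have F: "apply_vf Dx_star (Yc (Suc (Suc n))) p = - (qF p * apply_vf Dx_star (Xc (Suc n)) p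
       + apply_vf Dx_star qF p * Xc (Suc n) p) - real n * Xc n p"
      using DY[of "Suc (Suc n)"] TXpsi[of n] Suc by simp
    have C: "apply_vf Dy_star (Yc (Suc (Suc n))) p = - (qF p * apply_vf Dy_star (Xc (Suc n)) p
       + apply_vf Dy_star qF p * Xc (Suc n) p) - real n * Yc n p"
      using DY[of "Suc (Suc n)"] TYpsi[of n] Suc by simp
    have E: "apply_vf Dx_star (Xc (Suc (Suc n))) p = sF p * apply_vf Dx_star (Xc (Suc n)) p
       + apply_vf Dx_star sF p * Xc (Suc n) p + apply_vf Dx_star (Yc (Suc n)) p"
      using DX[of "Suc (Suc n)"] by simp
    have X1: "Xc (Suc n) p = sF p * Xc n p + Yc n p"
    proof -
      have "2 \<le> Suc n" using Suc by simp
      from fun_cong[OF LX[OF this], of p] show ?thesis by simp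
    qed
    show ?thesis
      by (rule alg[OF A D Q2 F C E Q1 X1 tys TYq[OF uv] TXq TXs sF_def qF_def])
  qed
  show ?case using Q2 new by blast
qed

lemma psi_comp: assumes "3 \<le> i" "p (CU 0) \<noteq> p (CV 0)"
  shows "apply_vf Dx_star (Yk i) p = apply_vf Dy_star (Xk i) p"
proof -
  have "Xc i = Xk i" "Yc i = Yk i" using assms(1) by (auto simp: Xc_def Yc_def)
  then show ?thesis using main_Q[OF assms(2), of "i - 1"] assms(1) by simp
qed

definition supp :: "nat \<Rightarrow> coord set" where "supp n = {c. \<forall>j. c = CPsi j \<longrightarrow> j < n}"

lemma psi_agree: "(\<forall>c\<in>supp n. p c = q c) \<Longrightarrow> 1 \<le> i \<Longrightarrow> i < n \<Longrightarrow> psi i p = psi i q"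
  unfolding psi_def supp_def by auto

lemma sigma_agree: "p (CU 0) = q (CU 0) \<Longrightarrow> p (CV 0) = q (CV 0) \<Longrightarrow> sigma m p = sigma m q"
  unfolding sigma_def by simp

lemma Xk_dep: "dep (supp n) (Xk n)"
  unfolding dep_def
proof (intro allI impI)
  fix p q :: pt assume h: "\<forall>c\<in>supp n. p c = q c"
  have u: "p (CU 0) = q (CU 0)" "p (CV 0) = q (CV 0)" using h by (auto simp: supp_def)
  have "(\<Sum>i = 1..n - 3. real i * sigma (n - i - 3) p * psi i p)
      = (\<Sum>i = 1..n - 3. real i * sigma (n - i - 3) q * psi i q)"
  proof (rule sum.cong[OF refl])
    fix x assume x: "x \<in> {1..n - 3}"
    have "psi x p = psi x q" using x by (intro psi_agree[OF h]) auto
    then show "real x * sigma (n - x - 3) p * psi x p = real x * sigma (n - x - 3) q * psi x q"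
      using sigma_agree[OF u] by simp
  qed
  then show "Xk n p = Xk n q" unfolding Xk_def using sigma_agree[OF u] by simp
qed

lemma supp_mono: "m \<le> n \<Longrightarrow> supp m \<subseteq> supp n" unfolding supp_def by auto

lemma Yk_dep: assumes "n \<ge> 3" shows "dep (supp n) (Yk n)"
  unfolding dep_def
proof (intro allI impI)
  fix p q :: pt assume h: "\<forall>c\<in>supp n. p c = q c"
  have u: "p (CU 0) = q (CU 0)" "p (CV 0) = q (CV 0)" using h by (auto simp: supp_def)
  have x: "Xk (n - 1) p = Xk (n - 1) q"
    using Xk_dep[of "n - 1"] supp_mono[of "n - 1" n] h unfolding dep_def by (metis diff_le_self subsetD)
  have "psi (n - 2) p = psi (n - 2) q" using psi_agree[OF h] assms by simp
  then show "Yk n p = Yk n q" unfolding Yk_def using u x by simp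
qed

definition npsi :: "coord set" where "npsi = {c. \<forall>j. c \<noteq> CPsi j}"

lemma dep_Dx_step: assumes "dep npsi f" shows "dep npsi (apply_vf Dx f)"
  unfolding dep_def
proof (intro allI impI)
  fix p q :: pt assume h: "\<forall>c\<in>npsi. p c = q c"
  have "(\<lambda>c. Dx c p * pderiv_coord c f p) = (\<lambda>c. Dx c q * pderiv_coord c f q)"
  proof (rule ext)
    fix c
    show "Dx c p * pderiv_coord c f p = Dx c q * pderiv_coord c f q"
    proof (cases "c \<in> npsi")
      case True
      have d: "Dx c p = Dx c q" using True h by (cases c) (auto simp: npsi_def)
      have "(\<lambda>t. f (p(c:=t))) = (\<lambda>t. f (q(c:=t)))"
      proof (rule ext)
        fix t
        have "\<forall>c'\<in>npsi. (p(c:=t)) c' = (q(c:=t)) c'" using h by auto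
        then show "f (p(c:=t)) = f (q(c:=t))" using assms unfolding dep_def by blast
      qed
      moreover have "p c = q c" using True h by auto
      ultimately show ?thesis using d unfolding pderiv_coord_def by simp
    next
      case False
      then obtain j where "c = CPsi j" unfolding npsi_def by auto
      then show ?thesis by simp
    qed
  qed
  then show "apply_vf Dx f p = apply_vf Dx f q" unfolding apply_vf_def by simp
qed

lemma dep_pow: "dep npsi ((apply_vf Dx ^^ i) rhsU) \<and> dep npsi ((apply_vf Dx ^^ i) rhsV)"
proof (induction i)
  case 0 then show ?case unfolding dep_def npsi_def rhsU_def rhsV_def by simp
next
  case (Suc i) then show ?case using dep_Dx_step by simp
qed

lemma bracket_npsi:
  assumes V: "\<And>c. c \<in> npsi \<Longrightarrow> V c = Dx c" and W: "\<And>c. c \<in> npsi \<Longrightarrow> W c = Dy c"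
    and c: "c \<in> npsi"
  shows "lie_bracket V W c p = 0"
proof -
  have agree: "apply_vf V f p = apply_vf Dx f p" if "dep npsi f" for f
    by (rule apply_vf_agree[OF that]) (simp only: V)
  have mem: "CX \<in> npsi" "CY \<in> npsi" "\<And>i. CU i \<in> npsi" "\<And>i. CV i \<in> npsi" by (auto simp: npsi_def)
  show ?thesis
  proof (cases c)
    case CX
    have "V CX = (\<lambda>p. 1)" "W CX = (\<lambda>p. 0)" using V[OF mem(1)] W[OF mem(1)] by simp_all
    then show ?thesis unfolding lie_bracket_def CX by (simp only: apply_vf_const)
  next
    case CY
    have "V CY = (\<lambda>p. 0)" "W CY = (\<lambda>p. 1)" using V[OF mem(2)] W[OF mem(2)] by simp_all
    then show ?thesis unfolding lie_bracket_def CY by (simp only: apply_vf_const)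
  next
    case (CU i)
    have v: "V (CU i) = (\<lambda>q. q (CU (Suc i)))" using V[OF mem(3)] by simp
    have w: "W (CU i) = (apply_vf Dx ^^ i) rhsU" using W[OF mem(3)] by simp
    have w2: "W (CU (Suc i)) = (apply_vf Dx ^^ Suc i) rhsU" using W[OF mem(3)] by simp
    have "lie_bracket V W c p = apply_vf V ((apply_vf Dx ^^ i) rhsU) p - apply_vf W (\<lambda>q. q (CU (Suc i))) p"
      unfolding lie_bracket_def CU v w by (rule refl)
    also have "\<dots> = apply_vf Dx ((apply_vf Dx ^^ i) rhsU) p - W (CU (Suc i)) p"
      unfolding apply_vf_proj agree[OF conjunct1[OF dep_pow]] by (rule refl)
    also have "\<dots> = 0" unfolding w2 by simp
    finally show ?thesis .
  next
    case (CV i)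
    have v: "V (CV i) = (\<lambda>q. q (CV (Suc i)))" using V[OF mem(4)] by simp
    have w: "W (CV i) = (apply_vf Dx ^^ i) rhsV" using W[OF mem(4)] by simp
    have w2: "W (CV (Suc i)) = (apply_vf Dx ^^ Suc i) rhsV" using W[OF mem(4)] by simp
    have "lie_bracket V W c p = apply_vf V ((apply_vf Dx ^^ i) rhsV) p - apply_vf W (\<lambda>q. q (CV (Suc i))) p"
      unfolding lie_bracket_def CV v w by (rule refl)
    also have "\<dots> = apply_vf Dx ((apply_vf Dx ^^ i) rhsV) p - W (CV (Suc i)) p"
      unfolding apply_vf_proj agree[OF conjunct2[OF dep_pow]] by (rule refl)
    also have "\<dots> = 0" unfolding w2 by simp
    finally show ?thesis .
  next
    case (CPsi j) then show ?thesis using c by (simp add: npsi_def)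
  qed
qed

theorem mainTheorem5:
  shows "(\<forall>k::nat. k \<ge> 2 \<longrightarrow>
            (\<forall>p::pt. p (CU 0) \<noteq> p (CV 0) \<longrightarrow>
               (\<forall>c. lie_bracket (Dxk k) (Dyk k) c p = 0)))
       \<and> (\<forall>p::pt. p (CU 0) \<noteq> p (CV 0) \<longrightarrow>
               (\<forall>c. lie_bracket Dx_star Dy_star c p = 0))"
proof (intro conjI allI impI)
  fix k :: nat and p :: pt and c
  assume k: "k \<ge> 2" and uv: "p (CU 0) \<noteq> p (CV 0)"
  show "lie_bracket (Dxk k) (Dyk k) c p = 0"
  proof (cases "c \<in> npsi")
    case True
    show ?thesis by (rule bracket_npsi[OF _ _ True]) (auto simp: npsi_def Dxk_def Dyk_def split: coord.split)
  next
    case False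
    then obtain i where ci: "c = CPsi i" unfolding npsi_def by auto
    show ?thesis
    proof (cases "3 \<le> i \<and> i \<le> k + 1")
      case True
      have ag1: "apply_vf (Dxk k) (Yk i) p = apply_vf Dx_star (Yk i) p"
        by (rule apply_vf_agree[OF Yk_dep]) (use True in \<open>auto simp: supp_def Dxk_def Dx_star_def split: coord.split\<close>)
      have ag2: "apply_vf (Dyk k) (Xk i) p = apply_vf Dy_star (Xk i) p"
        by (rule apply_vf_agree[OF Xk_dep]) (use True in \<open>auto simp: supp_def Dyk_def Dy_star_def split: coord.split\<close>)
      show ?thesis unfolding lie_bracket_def ci using True ag1 ag2 psi_comp[OF _ uv, of i]
        by (simp add: Dxk_def Dyk_def)
    next
      case False
      then show ?thesis unfolding lie_bracket_def ci by (auto simp: Dxk_def Dyk_def)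
    qed
  qed
next
  fix p :: pt and c
  assume uv: "p (CU 0) \<noteq> p (CV 0)"
  show "lie_bracket Dx_star Dy_star c p = 0"
  proof (cases "c \<in> npsi")
    case True
    show ?thesis by (rule bracket_npsi[OF _ _ True]) (auto simp: npsi_def Dx_star_def Dy_star_def split: coord.split)
  next
    case False
    then obtain i where ci: "c = CPsi i" unfolding npsi_def by auto
    show ?thesis
    proof (cases "3 \<le> i")
      case True
      then show ?thesis unfolding lie_bracket_def ci using psi_comp[OF _ uv, of i]
        by (simp add: Dx_star_def Dy_star_def)
    next
      case False
      then show ?thesis unfolding lie_bracket_def ci by (simp add: Dx_star_def Dy_star_def)
    qed
  qed
qed


end
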